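(* Let $X$ be a compact metric space, $T\colon X\to X$ a homeomorphism and $\mu$ an ergodic $T$-invariant Borel probability measure. Let $A,H\colon X\to\mathbb{GL}(2,\mathbb{R})$ be continuous and suppose the cocycles $A_T$ and $H_T$ are quasi-conjugated. Then (i) for every $\theta\in\mathbb{R}$ the cocycles generated by $A_\theta(x)=A(x)R_\theta$ and $H_\theta(x)=H(x)R_\theta$ over $T$ are quasi-conjugated, and (ii) $\lambda^+(A)=\lambda^+(H)$.
   Context: For continuous $B\colon X\to\mathbb{GL}(2,\mathbb{R})$, $B_T(x,v)=(Tx,B(x)v)$ on $X\times\mathbb{R}^2$, $B^n(x)=B(T^{n-1}x)\cdots B(x)$, and $\lambda^+(B)=\lim_{n\to\infty}\frac1n\log\|B^n(x)\|$ ($\mu$-a.e. constant). $R_\theta$ is the rotation by angle $\theta$. The cocycles $A_T$ and $H_T$ are quasi-conjugated if there exist families $\{B(x)\in\mathbb{SO}(2,\mathbb{R}):x\in X\}$ and $\{D(x)\in\mathbb{SO}(2,\mathbb{R}):x\in X\}$ (no continuity in $x$ required) such that $H(x)=D(x)^{-1}A(x)B(x)$ and $B(Tx)=s(x)D(x)$ with $s(x)\in\{1,-1\}$, for every $x\in X$. *)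

theory Defs
  imports "HOL-Probability.Probability"
begin

definition rot :: "real \<Rightarrow> real^2^2" where
  "rot \<theta> = vector [vector [cos \<theta>, - sin \<theta>], vector [sin \<theta>, cos \<theta>]]"

definition SO2 :: "(real^2^2) set" where
  "SO2 = {U. orthogonal_matrix U \<and> det U = 1}"

fun cocycle :: "('a \<Rightarrow> 'a) \<Rightarrow> ('a \<Rightarrow> real^2^2) \<Rightarrow> nat \<Rightarrow> 'a \<Rightarrow> real^2^2" where
  "cocycle T B 0 x = mat 1"
| "cocycle T B (Suc n) x = B ((T ^^ n) x) ** cocycle T B n x"

definition opnorm :: "real^2^2 \<Rightarrow> real" where
  "opnorm B = onorm (\<lambda>v. B *v v)"

definition lyap :: "'a measure \<Rightarrow> ('a \<Rightarrow> 'a) \<Rightarrow> ('a \<Rightarrow> real^2^2) \<Rightarrow> real" where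
  "lyap M T B = (THE c. AE x in M.
      (\<lambda>n. ln (opnorm (cocycle T B n x)) / real n) \<longlonglongrightarrow> c)"

definition measure_preserving :: "'a measure \<Rightarrow> ('a \<Rightarrow> 'a) \<Rightarrow> bool" where
  "measure_preserving M T \<longleftrightarrow> T \<in> M \<rightarrow>\<^sub>M M \<and> distr M M T = M"

definition ergodic :: "'a measure \<Rightarrow> ('a \<Rightarrow> 'a) \<Rightarrow> bool" where
  "ergodic M T \<longleftrightarrow> (\<forall>S \<in> sets M. T -` S \<inter> space M = S \<longrightarrow>
       measure M S = 0 \<or> measure M S = 1)"

text \<open>Quasi-conjugacy of the cocycles A_T and H_T over T on X
  (no continuity of B, D in x required).\<close>
definition quasi_conj :: "'a set \<Rightarrow> ('a \<Rightarrow> 'a) \<Rightarrow> ('a \<Rightarrow> real^2^2) \<Rightarrow> ('a \<Rightarrow> real^2^2) \<Rightarrow> bool" where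
  "quasi_conj X T A H \<longleftrightarrow> (\<exists>B D s. \<forall>x\<in>X.
      B x \<in> SO2 \<and> D x \<in> SO2 \<and> s x \<in> {1, -1::real} \<and>
      H x = matrix_inv (D x) ** A x ** B x \<and>
      B (T x) = s x *\<^sub>R D x)"

end

theory Submission
  imports Defs
begin

lemma orth_norm:
  assumes "orthogonal_matrix (U::real^2^2)"
  shows "norm (U *v v) = norm v"
proof -
  have "orthogonal_transformation ((*v) U)"
    using assms by (simp add: orthogonal_transformation_matrix matrix_of_matrix_vector_mul)
  thus ?thesis by (rule orthogonal_transformation_norm)
qed

lemma opnorm_left:
  assumes "orthogonal_matrix (U::real^2^2)"
  shows "opnorm (U ** C) = opnorm C"
  unfolding opnorm_def onorm_def
  by (simp add: matrix_vector_mul_assoc[symmetric] orth_norm[OF assms])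

lemma opnorm_right:
  assumes "orthogonal_matrix (V::real^2^2)"
  shows "opnorm (C ** V) = opnorm C"
proof -
  let ?g = "\<lambda>y::real^2. norm (C *v y) / norm y"
  have eq: "(\<lambda>x. norm ((C ** V) *v x) / norm x) = ?g \<circ> (\<lambda>x. V *v x)"
    by (auto simp: matrix_vector_mul_assoc[symmetric] orth_norm[OF assms])
  have surj: "range (\<lambda>x. V *v x) = UNIV"
  proof -
    have "V *v (transpose V *v y) = y" for y
      using assms by (simp add: orthogonal_matrix_def matrix_vector_mul_assoc del: transpose_matrix_vector)
    thus ?thesis by (metis surj_def)
  qed
  have "(SUP x. norm ((C ** V) *v x) / norm x) = (SUP y. ?g y)"
    unfolding eq image_comp[symmetric] surj by simp
  thus ?thesis unfolding opnorm_def onorm_def by simp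
qed

lemma opnorm_sign:
  assumes "c \<in> {1, -1::real}"
  shows "opnorm (c *\<^sub>R C) = opnorm C"
  using assms unfolding opnorm_def onorm_def
  by (auto simp: scaleR_matrix_vector_assoc[symmetric])

lemma SO2_orth: "U \<in> SO2 \<Longrightarrow> orthogonal_matrix U"
  by (simp add: SO2_def)

lemma SO2_inv:
  assumes "U \<in> SO2"
  shows "U ** matrix_inv U = mat 1"
proof -
  have o: "orthogonal_matrix U" using assms by (simp add: SO2_def)
  have "\<exists>A'. U ** A' = mat 1 \<and> A' ** U = mat 1"
    using o unfolding orthogonal_matrix_def by blast
  then show ?thesis unfolding matrix_inv_def by (rule someI_ex[THEN conjunct1])
qed

lemma SO2_form:
  assumes "U \<in> SO2"
  shows "U$2$2 = U$1$1 \<and> U$1$2 = - U$2$1"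
proof -
  have o: "transpose U ** U = mat 1" and d: "det U = 1"
    using assms by (auto simp: SO2_def orthogonal_matrix_def)
  have e: "(transpose U ** U)$i$j = mat 1 $ i $ j" for i j using o by simp
  have e1: "U$1$1 * U$1$1 + U$2$1 * U$2$1 = 1"
    using e[of 1 1] by (simp add: matrix_matrix_mult_def transpose_def sum_2 mat_def)
  have e2: "U$1$2 * U$1$2 + U$2$2 * U$2$2 = 1"
    using e[of 2 2] by (simp add: matrix_matrix_mult_def transpose_def sum_2 mat_def)
  have dd: "U$1$1 * U$2$2 - U$1$2 * U$2$1 = 1" using d by (simp add: det_2)
  have "(U$2$2 - U$1$1)^2 + (U$1$2 + U$2$1)^2 = 0"
    using e1 e2 dd by (simp add: power2_eq_square algebra_simps)
  hence "U$2$2 - U$1$1 = 0 \<and> U$1$2 + U$2$1 = 0"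
    by (simp add: sum_power2_eq_zero_iff)
  thus ?thesis by simp
qed

lemma SO2_comm:
  assumes "U \<in> SO2"
  shows "U ** rot t = rot t ** U"
  using SO2_form[OF assms]
  by (simp add: rot_def vec_eq_iff forall_2 matrix_matrix_mult_def sum_2 algebra_simps)

theorem lemma2p1:
  fixes X :: "'a::metric_space set" and T Tinv :: "'a \<Rightarrow> 'a"
    and M :: "'a measure" and A H :: "'a \<Rightarrow> real^2^2"
  assumes "compact X"
    and "homeomorphism X X T Tinv"
    and "space M = X" and "sets M = sets (restrict_space borel X)"
    and "prob_space M"
    and "measure_preserving M T"
    and "ergodic M T"
    and "continuous_on X A" and "\<forall>x\<in>X. invertible (A x)"
    and "continuous_on X H" and "\<forall>x\<in>X. invertible (H x)"
    and "quasi_conj X T A H"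
  shows "(\<forall>\<theta>::real. quasi_conj X T (\<lambda>x. A x ** rot \<theta>) (\<lambda>x. H x ** rot \<theta>))
         \<and> lyap M T A = lyap M T H"
proof -
  obtain B D s where Q: "\<And>x. x \<in> X \<Longrightarrow> B x \<in> SO2 \<and> D x \<in> SO2 \<and> s x \<in> {1, -1::real} \<and>
      H x = matrix_inv (D x) ** A x ** B x \<and> B (T x) = s x *\<^sub>R D x"
    using assms(12) unfolding quasi_conj_def by blast
  have TX: "x \<in> X \<Longrightarrow> T x \<in> X" for x
    using assms(2) unfolding homeomorphism_def by blast
  have TnX: "x \<in> X \<Longrightarrow> (T ^^ n) x \<in> X" for x n
    by (induction n) (auto simp: TX)
  have part1: "quasi_conj X T (\<lambda>x. A x ** rot \<theta>) (\<lambda>x. H x ** rot \<theta>)" for \<theta>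
  proof -
    have "\<forall>x\<in>X. B x \<in> SO2 \<and> D x \<in> SO2 \<and> s x \<in> {1, -1::real} \<and>
      H x ** rot \<theta> = matrix_inv (D x) ** (A x ** rot \<theta>) ** B x \<and> B (T x) = s x *\<^sub>R D x"
    proof
      fix x assume x: "x \<in> X"
      note q = Q[OF x]
      have "H x ** rot \<theta> = matrix_inv (D x) ** (A x ** rot \<theta>) ** B x"
        using q SO2_comm[of "B x" \<theta>] by (metis matrix_mul_assoc)
      with q show "B x \<in> SO2 \<and> D x \<in> SO2 \<and> s x \<in> {1, -1::real} \<and>
      H x ** rot \<theta> = matrix_inv (D x) ** (A x ** rot \<theta>) ** B x \<and> B (T x) = s x *\<^sub>R D x" by blast
    qed
    then show ?thesis unfolding quasi_conj_def by blast
  qed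
  have key: "x \<in> X \<Longrightarrow> \<exists>c\<in>{1, -1::real}. B ((T ^^ n) x) ** cocycle T H n x = c *\<^sub>R (cocycle T A n x ** B x)" for x n
  proof (induction n)
    case 0 show ?case by (intro bexI[of _ 1]) auto
  next
    case (Suc n)
    then obtain c where c: "c \<in> {1, -1::real}"
      and IH: "B ((T ^^ n) x) ** cocycle T H n x = c *\<^sub>R (cocycle T A n x ** B x)" by blast
    let ?y = "(T ^^ n) x"
    have y: "?y \<in> X" using TnX Suc.prems by blast
    note q = Q[OF y]
    have "B ((T ^^ Suc n) x) ** cocycle T H (Suc n) x
        = (s ?y *\<^sub>R D ?y) ** (matrix_inv (D ?y) ** A ?y ** B ?y) ** cocycle T H n x"
      using q by (simp add: matrix_mul_assoc)
    also have "\<dots> = s ?y *\<^sub>R ((D ?y ** matrix_inv (D ?y)) ** A ?y ** (B ?y ** cocycle T H n x))"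
      by (simp add: matrix_mul_assoc matrix_scalar_ac scalar_matrix_assoc[symmetric])
    also have "\<dots> = (s ?y * c) *\<^sub>R (cocycle T A (Suc n) x ** B x)"
      using SO2_inv[of "D ?y"] q IH
      by (simp add: matrix_mul_assoc matrix_scalar_ac scalar_matrix_assoc[symmetric])
    finally show ?case using c q by (intro bexI[of _ "s ?y * c"]) auto
  qed
  have eqn: "x \<in> X \<Longrightarrow> opnorm (cocycle T H n x) = opnorm (cocycle T A n x)" for x n
  proof -
    assume x: "x \<in> X"
    obtain c where c: "c \<in> {1, -1::real}"
      and e: "B ((T ^^ n) x) ** cocycle T H n x = c *\<^sub>R (cocycle T A n x ** B x)"
      using key[OF x] by blast
    have ob: "orthogonal_matrix (B ((T ^^ n) x))" "orthogonal_matrix (B x)"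
      using Q[OF TnX[OF x]] Q[OF x] SO2_orth by auto
    have "opnorm (cocycle T H n x) = opnorm (B ((T ^^ n) x) ** cocycle T H n x)"
      using opnorm_left[OF ob(1)] by simp
    also have "\<dots> = opnorm (cocycle T A n x)"
      using e opnorm_sign[OF c] opnorm_right[OF ob(2)] by simp
    finally show ?thesis .
  qed
  have "lyap M T A = lyap M T H"
    unfolding lyap_def
  proof (rule arg_cong[where f = The], rule ext, rule AE_cong)
    fix c x assume "x \<in> space M"
    then have "x \<in> X" using assms(3) by simp
    then show "((\<lambda>n. ln (opnorm (cocycle T A n x)) / real n) \<longlonglongrightarrow> c) =
               ((\<lambda>n. ln (opnorm (cocycle T H n x)) / real n) \<longlonglongrightarrow> c)"
      using eqn by simp
  qed
  with part1 show ?thesis by blast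
qed

end
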